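(* Let $T=ABCD$ be a nondegenerate tetrahedron in $\mathbb{R}^3$ (vertices not coplanar) and let $AB$ be one of its edges. If $\mathbf{v}_{AB}(T)=\mathbf{0}$, then $T$ is achiral.
   Context: A tetrahedron (an ordered or unordered set of four points) in $\mathbb{R}^3$ is achiral if it can be mapped onto its mirror image by an orientation-preserving isometry of $\mathbb{R}^3$ (equivalently, it is congruent to its mirror image via a proper rigid motion); otherwise it is chiral. Edge vector $\mathbf{v}_{AB}$: Given the edge $AB$ of $T=ABCD$, label the four vertices as $L,R,K,F$ with $\{L,R\}=\{A,B\}$ and $\{K,F\}=\{C,D\}$ such that $(\vec{LK}\times\vec{LF})\cdot\vec{LR}\ge 0$ (there are two such labellings, obtained from each other by swapping $L\leftrightarrow R$ together with $K\leftrightarrow F$; both give the same $\mathbf{v}_{AB}$ below). Rotate the faces $LRK$ and $LRF$ about the line $LR$ into a common plane with $K$ and $F$ on the same side of $LR$. In this plane use the Cartesian coordinates whose $x$-axis is the line $LR$ directed from $L$ to $R$ and whose $y$-axis is the perpendicular bisector $m$ of segment $LR$, with $y\ge 0$ on the side containing $K,F$. Thus $x_K$ is the signed distance from $K$ to $m$ (negative if $K$ is closer to $L$ than to $R$), i.e. $x_K=\frac{\vec{LK}\cdot\vec{LR}}{|LR|}-\frac{|LR|}{2}$, and $y_K=\frac{|\vec{LK}\times\vec{LR}|}{|LR|}\ge 0$ is the distance from $K$ to the line $LR$; similarly for $(x_F,y_F)$. Let $\alpha\in[0,\pi]$ be the dihedral angle between the planes $ABC$ and $ABD$ of $T$. Define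 $$\mathbf{v}_{AB}\coloneqq \sin(\alpha)\,\big(x_F-x_K,\ (y_F-y_K)(x_F+x_K)\big)\in\mathbb{R}^2.$$ *)

theory Defs
  imports "HOL-Analysis.Analysis"
begin

type_synonym point = "real^3"

text \<open>Mirror image: point reflection through the origin (an orientation-reversing
isometry of R^3; any fixed one gives the same notion of chirality).\<close>
definition mirror_image :: "point set \<Rightarrow> point set" where
  "mirror_image S = uminus ` S"

definition achiral :: "point set \<Rightarrow> bool" where
  "achiral S \<longleftrightarrow> (\<exists>Q b. rotation_matrix Q \<and> (\<lambda>x. Q *v x + b) ` S = mirror_image S)"

definition xcoord :: "point \<Rightarrow> point \<Rightarrow> point \<Rightarrow> real" where
  "xcoord L R P = ((P - L) \<bullet> (R - L)) / norm (R - L) - norm (R - L) / 2"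

definition ycoord :: "point \<Rightarrow> point \<Rightarrow> point \<Rightarrow> real" where
  "ycoord L R P = norm (cross3 (P - L) (R - L)) / norm (R - L)"

text \<open>Dihedral angle between planes ABC and ABD along edge AB: angle between
the components of C - A and D - A orthogonal to B - A.\<close>
definition perp_comp :: "point \<Rightarrow> point \<Rightarrow> point" where
  "perp_comp u v = v - ((v \<bullet> u) / (u \<bullet> u)) *\<^sub>R u"

definition dihedral :: "point \<Rightarrow> point \<Rightarrow> point \<Rightarrow> point \<Rightarrow> real" where
  "dihedral A B C D =
     (let u = perp_comp (B - A) (C - A); w = perp_comp (B - A) (D - A)
      in arccos ((u \<bullet> w) / (norm u * norm w)))"

definition edge_vec :: "point \<Rightarrow> point \<Rightarrow> point \<Rightarrow> point \<Rightarrow> real \<times> real" where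
  "edge_vec A B C D =
     (let L = A; R = B;
          K = (if (cross3 (C - A) (D - A)) \<bullet> (B - A) \<ge> 0 then C else D);
          F = (if (cross3 (C - A) (D - A)) \<bullet> (B - A) \<ge> 0 then D else C);
          xK = xcoord L R K; yK = ycoord L R K;
          xF = xcoord L R F; yF = ycoord L R F;
          s = sin (dihedral A B C D)
      in (s * (xF - xK), s * ((yF - yK) * (xF + xK))))"

end

theory Submission
  imports Defs
begin

lemma refl_matrix:
  fixes u :: "real^3"
  assumes Ueq: "u$1*u$1 + u$2*u$2 + u$3*u$3 = U" and U0: "U \<noteq> 0"
    and cdef: "c = 2 / U"
  defines "M \<equiv> (\<chi> i j. c * u$i * u$j - (if i = j then 1 else 0)) :: real^3^3"
  shows "rotation_matrix M" "\<And>x. M *v x = (c * (u \<bullet> x)) *\<^sub>R u - x"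
proof -
  show "\<And>x. M *v x = (c * (u \<bullet> x)) *\<^sub>R u - x"
    by (simp add: M_def vec_eq_iff forall_3 matrix_vector_mult_def sum_3 inner_vec_def algebra_simps)
  have "transpose M ** M = mat 1"
    unfolding M_def
    apply (simp add: vec_eq_iff forall_3 matrix_matrix_mult_def sum_3 transpose_def mat_def)
    apply (simp add: cdef field_simps U0)
    apply (simp add: Ueq[symmetric])
    apply (intro conjI)
    by algebra+
  moreover have "det M = 1"
    unfolding M_def
    apply (simp add: det_3)
    apply (simp add: cdef field_simps U0)
    apply (simp add: Ueq[symmetric])
    by algebra
  ultimately show "rotation_matrix M" by (simp add: rotation_matrix_def orthogonal_matrix)
qed

lemma bisect_perp:
  fixes P Q X :: "real^3"
  assumes "(X-P)\<bullet>(X-P) = (X-Q)\<bullet>(X-Q)"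
  shows "(X - (1/2) *\<^sub>R (P+Q)) \<bullet> (Q - P) = 0"
  using assms by (simp add: inner_diff_left inner_diff_right inner_add_left inner_add_right inner_commute algebra_simps)

lemma refl_achiral:
  fixes P Q X Y :: "real^3"
  assumes PQ: "P \<noteq> Q" and hX: "(X-P)\<bullet>(X-P) = (X-Q)\<bullet>(X-Q)" and hY: "(Y-P)\<bullet>(Y-P) = (Y-Q)\<bullet>(Y-Q)"
  shows "achiral {P,Q,X,Y}"
proof -
  define u where "u = Q - P"
  define U where "U = u$1*u$1+u$2*u$2+u$3*u$3"
  have uu: "u \<bullet> u = U" by (simp add: U_def inner_vec_def sum_3)
  have U0: "U \<noteq> 0" using PQ uu u_def by auto
  define c where "c = 2/U"
  define M :: "real^3^3" where "M = (\<chi> i j. c * u$i * u$j - (if i = j then 1 else 0))"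
  have rot: "rotation_matrix M" and Mv: "\<And>x. M *v x = (c * (u \<bullet> x)) *\<^sub>R u - x"
    using refl_matrix[OF U_def[symmetric] U0 c_def] M_def by auto
  define m where "m = (1/2) *\<^sub>R (P+Q)"
  define b where "b = - (c * (m \<bullet> u)) *\<^sub>R u"
  have f: "\<And>x. M *v x + b = (c * ((x - m) \<bullet> u)) *\<^sub>R u - x"
    by (simp add: Mv b_def inner_diff_left algebra_simps inner_commute)
  have Pm: "P - m = (-1/2) *\<^sub>R u" by (simp add: m_def u_def vec_eq_iff field_simps)
  have Qm: "Q - m = (1/2) *\<^sub>R u" by (simp add: m_def u_def vec_eq_iff field_simps)
  have "c * ((P - m) \<bullet> u) = -1" using U0 by (simp add: Pm uu c_def)
  then have fP: "M *v P + b = - Q" by (simp add: f u_def)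
  have "c * ((Q - m) \<bullet> u) = 1" using U0 by (simp add: Qm uu c_def)
  then have fQ: "M *v Q + b = - P" by (simp add: f u_def)
  have fX: "M *v X + b = - X"
    using bisect_perp[OF hX] by (simp add: f m_def u_def)
  have fY: "M *v Y + b = - Y"
    using bisect_perp[OF hY] by (simp add: f m_def u_def)
  have "(\<lambda>x. M *v x + b) ` {P,Q,X,Y} = mirror_image {P,Q,X,Y}"
    by (simp add: mirror_image_def fP fQ fX fY insert_commute)
  then show ?thesis unfolding achiral_def using rot by blast
qed

lemma dep_coplanar:
  fixes A B C D :: "real^3"
  assumes "k3 \<noteq> 0" "k1 *\<^sub>R (B - A) + k2 *\<^sub>R (C - A) + k3 *\<^sub>R (D - A) = 0"
  shows "coplanar {A,B,C,D}"
proof -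
  have e: "\<And>i. k1 * (B$i - A$i) + k2 * (C$i - A$i) + k3 * (D$i - A$i) = 0"
    using assms(2) by (simp add: vec_eq_iff)
  have "\<And>i. D$i = (1 + (k1 + k2)/k3) * A$i + (-k1/k3) * B$i + (-k2/k3) * C$i"
  proof -
    fix i
    have "k3 * D$i = (k3 + (k1 + k2)) * A$i + (-k1) * B$i + (-k2) * C$i"
      using e[of i] by (simp add: algebra_simps)
    then have "D$i = ((k3 + (k1 + k2)) * A$i + (-k1) * B$i + (-k2) * C$i) / k3"
      using assms(1) by (simp add: eq_divide_eq mult.commute)
    also have "\<dots> = (1 + (k1 + k2)/k3) * A$i + (-k1/k3) * B$i + (-k2/k3) * C$i"
      using assms(1) by (simp add: field_simps)
    finally show "D$i = (1 + (k1 + k2)/k3) * A$i + (-k1/k3) * B$i + (-k2/k3) * C$i" .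
  qed
  then have "D = (1 + (k1 + k2)/k3) *\<^sub>R A + (-k1/k3) *\<^sub>R B + (-k2/k3) *\<^sub>R C"
    by (simp add: vec_eq_iff)
  moreover have "(1 + (k1 + k2)/k3) + (-k1/k3) + (-k2/k3) = 1"
    using assms(1) by (simp add: field_simps)
  ultimately have "D \<in> affine hull {A,B,C}"
    unfolding affine_hull_3 by blast
  then have "{A,B,C,D} \<subseteq> affine hull {A,B,C}"
    using hull_subset[of "{A,B,C}" affine] by auto
  then show ?thesis unfolding coplanar_def by blast
qed

lemma triple_nz:
  fixes A B C D :: "real^3"
  assumes "\<not> coplanar {A,B,C,D}"
  shows "cross3 (C - A) (D - A) \<bullet> (B - A) \<noteq> 0"
proof
  assume h: "cross3 (C - A) (D - A) \<bullet> (B - A) = 0"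
  define N :: "real^3^3" where "N = vector [B - A, C - A, D - A]"
  have "det N = 0" using h unfolding N_def by (metis dot_cross_det inner_commute)
  then have "\<not> invertible (transpose N)" by (simp add: invertible_det_nz)
  then obtain k where k0: "k \<noteq> 0" and kN: "transpose N *v k = 0"
    using invertible_left_inverse matrix_left_invertible_ker by metis
  have lin: "(k$1) *\<^sub>R (B - A) + (k$2) *\<^sub>R (C - A) + (k$3) *\<^sub>R (D - A) = 0"
    using kN unfolding N_def
    by (simp add: vec_eq_iff forall_3 matrix_vector_mult_def transpose_def sum_3 algebra_simps)
  from k0 have "k$1 \<noteq> 0 \<or> k$2 \<noteq> 0 \<or> k$3 \<noteq> 0" by (simp add: vec_eq_iff forall_3)
  then show False
  proof (elim disjE)
    assume "k$3 \<noteq> 0" then show False using dep_coplanar[OF _ lin] assms by blast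
  next
    assume "k$2 \<noteq> 0"
    then have "coplanar {A,B,D,C}" using dep_coplanar[of "k$2" "k$1" B A "k$3" D C] lin by (simp add: algebra_simps)
    then show False using assms by (simp add: insert_commute)
  next
    assume "k$1 \<noteq> 0"
    then have "coplanar {A,D,C,B}" using dep_coplanar[of "k$1" "k$3" D A "k$2" C B] lin by (simp add: algebra_simps)
    then show False using assms by (simp add: insert_commute)
  qed
qed

lemma cross_perp:
  fixes y z v :: "real^3"
  shows "cross3 (y - a *\<^sub>R v) (z - b *\<^sub>R v) \<bullet> v = cross3 y z \<bullet> v"
  by (simp add: cross3_simps)

lemma sin_dihedral_nz:
  fixes A B C D :: "real^3"
  assumes tri: "cross3 (C - A) (D - A) \<bullet> (B - A) \<noteq> 0"
  shows "sin (dihedral A B C D) \<noteq> 0"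
proof -
  define v where "v = B - A"
  define u where "u = perp_comp v (C - A)"
  define w where "w = perp_comp v (D - A)"
  have "cross3 u w \<bullet> v = cross3 (C - A) (D - A) \<bullet> v"
    unfolding u_def w_def perp_comp_def by (rule cross_perp)
  then have cr: "cross3 u w \<noteq> 0" using tri v_def by auto
  have nc: "(norm (cross3 u w))\<^sup>2 + (u \<bullet> w)\<^sup>2 = (norm u * norm w)\<^sup>2" by (rule norm_cross_dot)
  have p: "(norm (cross3 u w))\<^sup>2 > 0" using cr by simp
  define N where "N = norm u * norm w"
  have N0: "N \<ge> 0" unfolding N_def by simp
  have lt: "(u \<bullet> w)\<^sup>2 < N\<^sup>2" using nc p unfolding N_def by linarith
  then have Np: "N > 0" using N0 by (metis less_le power2_eq_square mult_zero_left zero_le_power2 not_le)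
  have "\<bar>u \<bullet> w\<bar> < N" using power2_less_imp_less[of "\<bar>u \<bullet> w\<bar>" N] lt N0 by simp
  then have "-1 < (u \<bullet> w) / N" "(u \<bullet> w) / N < 1" using Np by (auto simp: field_simps abs_less_iff)
  then have "sin (arccos ((u \<bullet> w) / N)) \<noteq> 0" by (rule sin_arccos_nonzero)
  then show ?thesis unfolding dihedral_def Let_def u_def w_def v_def N_def by simp
qed

theorem lemma1:
  fixes A B C D :: "real^3"
  assumes "\<not> coplanar {A, B, C, D}"
    and "edge_vec A B C D = (0, 0)"
  shows "achiral {A, B, C, D}"
proof -
  have tri: "cross3 (C - A) (D - A) \<bullet> (B - A) \<noteq> 0" using triple_nz[OF assms(1)] .
  have sn: "sin (dihedral A B C D) \<noteq> 0" using sin_dihedral_nz[OF tri] .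
  define v where "v = B - A"
  have v0: "v \<noteq> 0" using tri v_def by auto
  have nv: "norm v > 0" using v0 by simp
  have CD: "C \<noteq> D" using tri by auto
  define K where "K = (if (cross3 (C - A) (D - A)) \<bullet> (B - A) \<ge> 0 then C else D)"
  define F where "F = (if (cross3 (C - A) (D - A)) \<bullet> (B - A) \<ge> 0 then D else C)"
  have KFc: "(K = C \<and> F = D) \<or> (K = D \<and> F = C)" unfolding K_def F_def by simp
  have KF: "{A,B,K,F} = {A,B,C,D}" using KFc by blast
  have KFne: "K \<noteq> F" using KFc CD by auto
  have ev: "edge_vec A B C D = (sin (dihedral A B C D) * (xcoord A B F - xcoord A B K),
      sin (dihedral A B C D) * ((ycoord A B F - ycoord A B K) * (xcoord A B F + xcoord A B K)))"
    unfolding edge_vec_def Let_def K_def F_def by simp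
  have xe: "xcoord A B F = xcoord A B K" and ye: "(ycoord A B F - ycoord A B K) * (xcoord A B F + xcoord A B K) = 0"
    using assms(2) sn unfolding ev by auto
  have dot_eq: "(K - A) \<bullet> v = (F - A) \<bullet> v"
    using xe nv unfolding xcoord_def v_def by (simp add: field_simps)
  from ye consider "ycoord A B F = ycoord A B K" | "xcoord A B F + xcoord A B K = 0" by auto
  then show ?thesis
  proof cases
    case 1
    then have n1: "norm (cross3 (K - A) v) = norm (cross3 (F - A) v)"
      using nv unfolding ycoord_def v_def by (simp add: divide_cancel_right)
    have n2: "(norm (cross3 (K - A) v))\<^sup>2 + ((K - A) \<bullet> v)\<^sup>2 = (norm (K - A) * norm v)\<^sup>2" by (rule norm_cross_dot)
    have n3: "(norm (cross3 (F - A) v))\<^sup>2 + ((F - A) \<bullet> v)\<^sup>2 = (norm (F - A) * norm v)\<^sup>2" by (rule norm_cross_dot)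
    have n4: "(norm (cross3 (K - A) v))\<^sup>2 = (norm (cross3 (F - A) v))\<^sup>2" using n1 by simp
    have n5: "((K - A) \<bullet> v)\<^sup>2 = ((F - A) \<bullet> v)\<^sup>2" using dot_eq by simp
    have "(norm (K - A) * norm v)\<^sup>2 = (norm (F - A) * norm v)\<^sup>2" using n2 n3 n4 n5 by linarith
    then have "norm (K - A) * norm v = norm (F - A) * norm v"
      by (simp add: power2_eq_iff_nonneg)
    then have "norm (K - A) = norm (F - A)" using nv by simp
    then have kk: "(K - A) \<bullet> (K - A) = (F - A) \<bullet> (F - A)" by (metis power2_norm_eq_inner)
    have hA: "(A - K) \<bullet> (A - K) = (A - F) \<bullet> (A - F)" using kk by (simp add: power2_norm_eq_inner[symmetric] norm_minus_commute)
    have eK: "B - K = v - (K - A)" "B - F = v - (F - A)" unfolding v_def by auto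
    have hB: "(B - K) \<bullet> (B - K) = (B - F) \<bullet> (B - F)"
      unfolding eK using kk dot_eq by (simp add: inner_diff_left inner_diff_right inner_commute)
    have "achiral {K, F, A, B}" by (rule refl_achiral[OF KFne hA hB])
    moreover have "{K, F, A, B} = {A, B, C, D}" using KF by blast
    ultimately show ?thesis by simp
  next
    case 2
    then have xk: "xcoord A B K = 0" "xcoord A B F = 0" using xe by auto
    have "norm v * norm v = v \<bullet> v" by (simp add: power2_eq_square[symmetric] power2_norm_eq_inner)
    have a1: "((K - A) \<bullet> v) / norm v = norm v / 2" "((F - A) \<bullet> v) / norm v = norm v / 2"
      using xk unfolding xcoord_def v_def by simp_all
    have a2: "(K - A) \<bullet> v = norm v / 2 * norm v" "(F - A) \<bullet> v = norm v / 2 * norm v"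
      using a1 nv by (simp_all add: divide_eq_eq)
    have hk: "(K - A) \<bullet> v = (v \<bullet> v) / 2" "(F - A) \<bullet> v = (v \<bullet> v) / 2"
      using a2 \<open>norm v * norm v = v \<bullet> v\<close> by simp_all
    have eK: "K - B = (K - A) - v" "F - B = (F - A) - v" unfolding v_def by auto
    have hK: "(K - A) \<bullet> (K - A) = (K - B) \<bullet> (K - B)"
      unfolding eK using hk by (simp add: inner_diff_left inner_diff_right inner_commute)
    have hF: "(F - A) \<bullet> (F - A) = (F - B) \<bullet> (F - B)"
      unfolding eK using hk by (simp add: inner_diff_left inner_diff_right inner_commute)
    have AB: "A \<noteq> B" using v0 v_def by auto
    have "achiral {A, B, K, F}" by (rule refl_achiral[OF AB hK hF])
    then show ?thesis using KF by simp
  qed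
qed
end
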